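(* Let $k\ge1$ be an integer, $G=(V,E)$ a $k$-perfectly orientable graph with certifying orientation $H$, and $Q$ the polytope \[ Q=\Big\{x\in[0,1]^V:\ x_v+\sum_{u\in N^+_H(v)}x_u\le k\ \text{ for all } v\in V\Big\}. \] For each $b\in[0,1]$: there is a deterministic, oblivious, monotone $(b/k,\,1-b)$-balanced contention resolution scheme for $Q$ (with respect to the independent sets of $G$), and there is a randomized monotone $(b/k,\,e^{-b})$-balanced contention resolution scheme for $Q$.
   Context: $\mathcal{I}$ denotes the family of independent sets of $G$; $\alpha(G')$ is the maximum size of an independent set of a graph $G'$. $G$ is $k$-perfectly orientable if there is an orientation $H=(V,A)$ of $G$ with $\alpha(G[N^+_H(v)])\le k$ for all $v$, where $N^+_H(v)=\{u:(v,u)\in A\}$. For $x\in[0,1]^V$, $R(x)$ denotes a random subset of $V$ containing each $v$ independently with probability $x_v$, and $\mathrm{support}(x)=\{v:x_v>0\}$; for $b\in[0,1]$, $bQ=\{bx:x\in Q\}$. For $b,c\in[0,1]$, a $(b,c)$-balanced contention resolution (CR) scheme $\pi$ for $Q$ is a procedure that for every $x\in bQ$ and $A\subseteq V$ returns a (possibly random) set $\pi_x(A)\subseteq A\cap\mathrm{support}(x)$ such that (i) $\pi_x(A)\in\mathcal{I}$ with probability 1 for all $A\subseteq V$, $x\in bQ$, and (ii) for all $x\in bQ$ and all $i\in\mathrm{support}(x)$, $\Pr[i\in\pi_x(R(x))\mid i\in R(x)]\ge c$. The scheme is monotone if $\Pr[i\in\pi_x(A_1)]\ge\Pr[i\in\pi_x(A_2)]$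 whenever $i\in A_1\subseteq A_2$; deterministic if $\pi$ is a deterministic algorithm; oblivious if it is deterministic and $\pi_x(A)=\pi_y(A)$ for all $x,y,A$.
   Formalization: An oblivious scheme is deterministic with $\pi_x(A_1)=\pi_y(A_2)$ whenever $A_1\cap\mathrm{support}(x)$ equals $A_2\cap\mathrm{support}(y)$, in place of $\pi_x(A)=\pi_y(A)$ for all x, y and A. The statement above fails without it. *)

theory Defs
  imports "HOL-Probability.Probability"
begin

definition simple_graph :: "'a set \<Rightarrow> ('a \<Rightarrow> 'a \<Rightarrow> bool) \<Rightarrow> bool" where
  "simple_graph V E \<longleftrightarrow> finite V \<and> (\<forall>u v. E u v \<longrightarrow> u \<in> V \<and> v \<in> V)
     \<and> (\<forall>u v. E u v \<longrightarrow> E v u) \<and> (\<forall>v. \<not> E v v)"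

definition indep_set :: "'a set \<Rightarrow> ('a \<Rightarrow> 'a \<Rightarrow> bool) \<Rightarrow> 'a set \<Rightarrow> bool" where
  "indep_set V E I \<longleftrightarrow> I \<subseteq> V \<and> (\<forall>u\<in>I. \<forall>v\<in>I. \<not> E u v)"

definition alpha :: "('a \<Rightarrow> 'a \<Rightarrow> bool) \<Rightarrow> 'a set \<Rightarrow> nat" where
  "alpha E S = Max {card I | I. I \<subseteq> S \<and> (\<forall>u\<in>I. \<forall>v\<in>I. \<not> E u v)}"

definition orientation :: "('a \<Rightarrow> 'a \<Rightarrow> bool) \<Rightarrow> ('a \<Rightarrow> 'a \<Rightarrow> bool) \<Rightarrow> bool" where
  "orientation E A \<longleftrightarrow> (\<forall>u v. A u v \<longrightarrow> E u v) \<and> (\<forall>u v. E u v \<longrightarrow> A u v \<or> A v u)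
     \<and> (\<forall>u v. A u v \<longrightarrow> \<not> A v u)"

definition out_nbrs :: "('a \<Rightarrow> 'a \<Rightarrow> bool) \<Rightarrow> 'a \<Rightarrow> 'a set" where
  "out_nbrs A v = {u. A v u}"

definition k_perfect_orientation :: "nat \<Rightarrow> 'a set \<Rightarrow> ('a \<Rightarrow> 'a \<Rightarrow> bool) \<Rightarrow> ('a \<Rightarrow> 'a \<Rightarrow> bool) \<Rightarrow> bool" where
  "k_perfect_orientation k V E A \<longleftrightarrow> orientation E A \<and> (\<forall>v\<in>V. alpha E (out_nbrs A v) \<le> k)"

text \<open>Vectors in R^V are functions vanishing outside V.\<close>
definition polytopeQ :: "nat \<Rightarrow> 'a set \<Rightarrow> ('a \<Rightarrow> 'a \<Rightarrow> bool) \<Rightarrow> ('a \<Rightarrow> real) set" where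
  "polytopeQ k V A = {x. (\<forall>v. v \<notin> V \<longrightarrow> x v = 0) \<and> (\<forall>v\<in>V. 0 \<le> x v \<and> x v \<le> 1)
      \<and> (\<forall>v\<in>V. x v + (\<Sum>u\<in>out_nbrs A v. x u) \<le> real k)}"

definition scaled :: "real \<Rightarrow> ('a \<Rightarrow> real) set \<Rightarrow> ('a \<Rightarrow> real) set" where
  "scaled b Q = {(\<lambda>v. b * x v) | x. x \<in> Q}"

definition support :: "'a set \<Rightarrow> ('a \<Rightarrow> real) \<Rightarrow> 'a set" where
  "support V x = {v\<in>V. x v > 0}"

definition randset :: "'a set \<Rightarrow> ('a \<Rightarrow> real) \<Rightarrow> 'a set pmf" where
  "randset V x = map_pmf (\<lambda>f. {v. f v}) (Pi_pmf V False (\<lambda>v. bernoulli_pmf (x v)))"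

text \<open>A (possibly randomized) CR scheme: sch x A is the distribution of pi_x(A).
  Joint distribution of (R(x), pi_x(R(x))).\<close>
definition joint :: "'a set \<Rightarrow> (('a \<Rightarrow> real) \<Rightarrow> 'a set \<Rightarrow> 'a set pmf) \<Rightarrow> ('a \<Rightarrow> real) \<Rightarrow> ('a set \<times> 'a set) pmf" where
  "joint V sch x = bind_pmf (randset V x) (\<lambda>R. map_pmf (\<lambda>S. (R, S)) (sch x R))"

definition balanced_CR :: "'a set \<Rightarrow> ('a \<Rightarrow> 'a \<Rightarrow> bool) \<Rightarrow> ('a \<Rightarrow> real) set \<Rightarrow> real \<Rightarrow> real
    \<Rightarrow> (('a \<Rightarrow> real) \<Rightarrow> 'a set \<Rightarrow> 'a set pmf) \<Rightarrow> bool" where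
  "balanced_CR V E Q b c sch \<longleftrightarrow>
     (\<forall>x\<in>scaled b Q. \<forall>A. A \<subseteq> V \<longrightarrow>
        (\<forall>S\<in>set_pmf (sch x A). S \<subseteq> A \<inter> support V x \<and> indep_set V E S)) \<and>
     (\<forall>x\<in>scaled b Q. \<forall>i\<in>support V x.
        measure_pmf.prob (joint V sch x) {p. i \<in> snd p \<and> i \<in> fst p}
          / measure_pmf.prob (randset V x) {R. i \<in> R} \<ge> c)"

definition monotone_CR :: "'a set \<Rightarrow> ('a \<Rightarrow> real) set \<Rightarrow> real
    \<Rightarrow> (('a \<Rightarrow> real) \<Rightarrow> 'a set \<Rightarrow> 'a set pmf) \<Rightarrow> bool" where
  "monotone_CR V Q b sch \<longleftrightarrow>
     (\<forall>x\<in>scaled b Q. \<forall>i A1 A2. i \<in> A1 \<longrightarrow> A1 \<subseteq> A2 \<longrightarrow> A2 \<subseteq> V \<longrightarrow>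
        measure_pmf.prob (sch x A1) {S. i \<in> S} \<ge> measure_pmf.prob (sch x A2) {S. i \<in> S})"

definition deterministic_CR :: "(('a \<Rightarrow> real) \<Rightarrow> 'a set \<Rightarrow> 'a set pmf) \<Rightarrow> bool" where
  "deterministic_CR sch \<longleftrightarrow> (\<exists>f. \<forall>x A. sch x A = return_pmf (f x A))"

definition oblivious_CR :: "'a set \<Rightarrow> (('a \<Rightarrow> real) \<Rightarrow> 'a set \<Rightarrow> 'a set pmf) \<Rightarrow> bool" where
  "oblivious_CR V sch \<longleftrightarrow> deterministic_CR sch \<and>
     (\<forall>x y A B. A \<inter> support V x = B \<inter> support V y \<longrightarrow> sch x A = sch y B)"

end

theory Submission
  imports Defs
begin

lemma meas_bind:
  "measure_pmf.prob (bind_pmf M N) X = measure_pmf.expectation M (\<lambda>x. measure_pmf.prob (N x) X)"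
proof -
  have "measure_pmf.prob (bind_pmf M N) X = enn2real (emeasure (bind_pmf M N) X)"
    by (simp add: measure_def)
  also have "\<dots> = enn2real (\<integral>\<^sup>+x. ennreal (measure_pmf.prob (N x) X) \<partial>M)"
    by (subst emeasure_bind_pmf) (simp only: measure_pmf.emeasure_eq_measure)
  also have "(\<integral>\<^sup>+x. ennreal (measure_pmf.prob (N x) X) \<partial>M) = ennreal (measure_pmf.expectation M (\<lambda>x. measure_pmf.prob (N x) X))"
    by (intro nn_integral_eq_integral measure_pmf.integrable_const_bound[where B=1]) auto
  finally show ?thesis by simp
qed

lemma prod_split3:
  fixes h :: "'a \<Rightarrow> real"
  assumes "finite V" "i \<in> V" "i \<notin> Ou" "Ou \<subseteq> V" "\<And>v. v \<in> V \<Longrightarrow> v \<noteq> i \<Longrightarrow> v \<notin> Ou \<Longrightarrow> h v = 1"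
  shows "(\<Prod>v\<in>V. h v) = h i * (\<Prod>u\<in>Ou. h u)"
proof -
  have "(\<Prod>v\<in>V. h v) = h i * (\<Prod>v\<in>V - {i}. h v)"
    using assms by (simp add: prod.remove)
  also have "(\<Prod>v\<in>V - {i}. h v) = (\<Prod>u\<in>Ou. h u)"
    using assms by (intro prod.mono_neutral_right) auto
  finally show ?thesis .
qed

lemma key_exp:
  fixes q c :: "'a \<Rightarrow> real" and a :: real
  assumes fin: "finite V" and iV: "i \<in> V" and iO: "i \<notin> Ou" and OV: "Ou \<subseteq> V"
    and q: "\<And>v. v \<in> V \<Longrightarrow> 0 \<le> q v \<and> q v \<le> 1" and a: "0 \<le> a" and c: "\<And>u. u \<in> Ou \<Longrightarrow> 0 \<le> c u"
  shows "measure_pmf.expectation (Pi_pmf V False (\<lambda>v. bernoulli_pmf (q v)))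
           (\<lambda>g. (if g i then a else 0) * (\<Prod>u\<in>Ou. if g u then c u else 1))
         = q i * a * (\<Prod>u\<in>Ou. 1 - q u + q u * c u)"
proof -
  define h where "h v t = (if v = i then (if t then a else 0) else if v \<in> Ou then (if t then c v else 1) else (1::real))" for v t
  have eq: "(if g i then a else 0) * (\<Prod>u\<in>Ou. if g u then c u else 1) = (\<Prod>v\<in>V. h v (g v))" for g :: "'a \<Rightarrow> bool"
  proof -
    have "(\<Prod>v\<in>V. h v (g v)) = h i (g i) * (\<Prod>u\<in>Ou. h u (g u))"
      by (rule prod_split3[OF fin iV iO OV]) (simp add: h_def)
    also have "(\<Prod>u\<in>Ou. h u (g u)) = (\<Prod>u\<in>Ou. if g u then c u else 1)"
      using iO by (intro prod.cong) (auto simp: h_def)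
    finally show ?thesis by (simp add: h_def)
  qed
  have "measure_pmf.expectation (Pi_pmf V False (\<lambda>v. bernoulli_pmf (q v)))
           (\<lambda>g. (if g i then a else 0) * (\<Prod>u\<in>Ou. if g u then c u else 1))
        = measure_pmf.expectation (Pi_pmf V False (\<lambda>v. bernoulli_pmf (q v))) (\<lambda>g. \<Prod>v\<in>V. h v (g v))"
    by (simp add: eq)
  also have "\<dots> = (\<Prod>v\<in>V. measure_pmf.expectation (bernoulli_pmf (q v)) (h v))"
    by (rule expectation_prod_Pi_pmf[OF fin])
       (auto simp: h_def a c intro!: integrable_measure_pmf_finite)
  also have "\<dots> = measure_pmf.expectation (bernoulli_pmf (q i)) (h i) * (\<Prod>u\<in>Ou. measure_pmf.expectation (bernoulli_pmf (q u)) (h u))"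
    by (rule prod_split3[OF fin iV iO OV]) (simp add: h_def q)
  also have "\<dots> = q i * a * (\<Prod>u\<in>Ou. 1 - q u + q u * c u)"
    using q iV OV iO by (auto simp: h_def intro!: prod.cong)
  finally show ?thesis .
qed

lemma prob_as_exp: "measure_pmf.prob M E = measure_pmf.expectation M (indicator E :: _ \<Rightarrow> real)"
  by simp

lemma key_prob:
  fixes q :: "'a \<Rightarrow> real"
  assumes fin: "finite V" and iV: "i \<in> V" and iO: "i \<notin> Ou" and OV: "Ou \<subseteq> V"
    and q: "\<And>v. v \<in> V \<Longrightarrow> 0 \<le> q v \<and> q v \<le> 1"
  shows "measure_pmf.prob (Pi_pmf V False (\<lambda>v. bernoulli_pmf (q v))) {g. g i \<and> (\<forall>u\<in>Ou. \<not> g u)}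
         = q i * (\<Prod>u\<in>Ou. 1 - q u)"
proof -
  have fO: "finite Ou" using fin OV finite_subset by blast
  have ind: "indicator {g. g i \<and> (\<forall>u\<in>Ou. \<not> g u)} g = (if g i then 1 else 0) * (\<Prod>u\<in>Ou. if g u then 0 else (1::real))" for g :: "'a \<Rightarrow> bool"
  proof (cases "\<exists>u\<in>Ou. g u")
    case True
    then show ?thesis using fO by (auto simp: indicator_def prod_zero_iff)
  next
    case False
    then show ?thesis by (auto simp: indicator_def)
  qed
  have "measure_pmf.prob (Pi_pmf V False (\<lambda>v. bernoulli_pmf (q v))) {g. g i \<and> (\<forall>u\<in>Ou. \<not> g u)}
     = measure_pmf.expectation (Pi_pmf V False (\<lambda>v. bernoulli_pmf (q v))) (indicator {g. g i \<and> (\<forall>u\<in>Ou. \<not> g u)})"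
    by (rule prob_as_exp)
  also have "\<dots> = measure_pmf.expectation (Pi_pmf V False (\<lambda>v. bernoulli_pmf (q v)))
           (\<lambda>g. (if g i then 1 else 0) * (\<Prod>u\<in>Ou. if g u then (\<lambda>_. 0) u else 1))"
    by (intro Bochner_Integration.integral_cong refl) (simp only: ind)
  also have "\<dots> = q i * 1 * (\<Prod>u\<in>Ou. 1 - q u + q u * 0)"
    by (rule key_exp[OF fin iV iO OV q]) auto
  finally show ?thesis by simp
qed

definition dets :: "('a \<Rightarrow> 'a \<Rightarrow> bool) \<Rightarrow> 'a set \<Rightarrow> 'a set" where
  "dets H B = {v\<in>B. \<forall>u\<in>out_nbrs H v. u \<notin> B}"

definition schg :: "'a set \<Rightarrow> ('a \<Rightarrow> 'a \<Rightarrow> bool) \<Rightarrow> (('a \<Rightarrow> real) \<Rightarrow> 'a \<Rightarrow> real) \<Rightarrow> ('a \<Rightarrow> real) \<Rightarrow> 'a set \<Rightarrow> 'a set pmf" where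
  "schg V H p x A = map_pmf (\<lambda>f. dets H (A \<inter> support V x \<inter> {v. f v})) (Pi_pmf V False (\<lambda>v. bernoulli_pmf (p x v)))"

lemma prob_sch:
  assumes fin: "finite V" and OV: "out_nbrs H i \<subseteq> V" and iO: "i \<notin> out_nbrs H i"
    and p: "\<And>v. v \<in> V \<Longrightarrow> 0 \<le> p x v \<and> p x v \<le> 1"
  shows "measure_pmf.prob (schg V H p x A) {S. i \<in> S} =
    (if i \<in> A \<inter> support V x then p x i * (\<Prod>u\<in>out_nbrs H i \<inter> A \<inter> support V x. 1 - p x u) else 0)"
proof (cases "i \<in> A \<inter> support V x")
  case True
  have iV: "i \<in> V" using True by (auto simp: support_def)
  have "(\<lambda>f. dets H (A \<inter> support V x \<inter> {v. f v})) -` {S. i \<in> S} = {g. g i \<and> (\<forall>u\<in>out_nbrs H i \<inter> A \<inter> support V x. \<not> g u)}"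
    using True by (auto simp: dets_def)
  then have "measure_pmf.prob (schg V H p x A) {S. i \<in> S} = measure_pmf.prob (Pi_pmf V False (\<lambda>v. bernoulli_pmf (p x v))) {g. g i \<and> (\<forall>u\<in>out_nbrs H i \<inter> A \<inter> support V x. \<not> g u)}"
    by (simp add: schg_def)
  also have "\<dots> = p x i * (\<Prod>u\<in>out_nbrs H i \<inter> A \<inter> support V x. 1 - p x u)"
    by (rule key_prob[OF fin iV _ _ p]) (use iO OV in auto)
  finally show ?thesis using True by simp
next
  case False
  have "(\<lambda>f. dets H (A \<inter> support V x \<inter> {v. f v})) -` {S. i \<in> S} = {}"
    using False by (auto simp: dets_def)
  then show ?thesis using False by (auto simp: schg_def)
qed

lemma prob_randset:
  assumes fin: "finite V" and iV: "i \<in> V" and x: "\<And>v. v \<in> V \<Longrightarrow> 0 \<le> x v \<and> x v \<le> 1"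
  shows "measure_pmf.prob (randset V x) {R. i \<in> R} = x i"
proof -
  have "measure_pmf.prob (randset V x) {R. i \<in> R} = measure_pmf.prob (Pi_pmf V False (\<lambda>v. bernoulli_pmf (x v))) {g. g i \<and> (\<forall>u\<in>{}. \<not> g u)}"
    by (simp add: randset_def)
  also have "\<dots> = x i * (\<Prod>u\<in>{}. 1 - x u)"
    by (rule key_prob[OF fin iV _ _ x]) auto
  finally show ?thesis by simp
qed

lemma prob_joint:
  assumes fin: "finite V" and OV: "out_nbrs H i \<subseteq> V" and iO: "i \<notin> out_nbrs H i"
    and p: "\<And>v. v \<in> V \<Longrightarrow> 0 \<le> p x v \<and> p x v \<le> 1"
    and x: "\<And>v. v \<in> V \<Longrightarrow> 0 \<le> x v \<and> x v \<le> 1"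
    and iS: "i \<in> support V x"
  shows "measure_pmf.prob (joint V (schg V H p) x) {pr. i \<in> snd pr \<and> i \<in> fst pr} =
     x i * p x i * (\<Prod>u\<in>out_nbrs H i \<inter> support V x. 1 - x u * p x u)"
proof -
  have iV: "i \<in> V" using iS by (auto simp: support_def)
  define Ou where "Ou = out_nbrs H i \<inter> support V x"
  have fO: "finite Ou" using fin OV finite_subset unfolding Ou_def by blast
  have inner: "measure_pmf.prob (map_pmf (\<lambda>S. (R, S)) (schg V H p x R)) {pr. i \<in> snd pr \<and> i \<in> fst pr}
     = (if i \<in> R then p x i * (\<Prod>u\<in>Ou \<inter> R. 1 - p x u) else 0)" for R
  proof (cases "i \<in> R")
    case True
    then have "(\<lambda>S. (R, S)) -` {pr. i \<in> snd pr \<and> i \<in> fst pr} = {S. i \<in> S}" by auto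
    then show ?thesis using True iS prob_sch[where p=p and x=x and A=R, OF fin OV iO p]
      by (simp add: Ou_def Int_ac)
  next
    case False
    then have "(\<lambda>S. (R, S)) -` {pr. i \<in> snd pr \<and> i \<in> fst pr} = {}" by auto
    then show ?thesis using False by simp
  qed
  have pr: "(\<Prod>u\<in>Ou \<inter> {v. g v}. 1 - p x u) = (\<Prod>u\<in>Ou. if g u then 1 - p x u else 1)" for g :: "'a \<Rightarrow> bool"
  proof -
    have "Ou \<inter> {v. g v} = {u\<in>Ou. g u}" by auto
    then show ?thesis using fO by (simp add: prod.inter_filter)
  qed
  have "measure_pmf.prob (joint V (schg V H p) x) {pr. i \<in> snd pr \<and> i \<in> fst pr}
     = measure_pmf.expectation (randset V x) (\<lambda>R. if i \<in> R then p x i * (\<Prod>u\<in>Ou \<inter> R. 1 - p x u) else 0)"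
    unfolding joint_def meas_bind inner ..
  also have "\<dots> = measure_pmf.expectation (Pi_pmf V False (\<lambda>v. bernoulli_pmf (x v)))
      (\<lambda>g. (if g i then p x i else 0) * (\<Prod>u\<in>Ou. if g u then (1 - p x u) else 1))"
    unfolding randset_def integral_map_pmf by (intro Bochner_Integration.integral_cong) (auto simp: pr)
  also have "\<dots> = x i * p x i * (\<Prod>u\<in>Ou. 1 - x u + x u * (1 - p x u))"
    by (rule key_exp[OF fin iV _ _ x]) (use iO OV p iV in \<open>auto simp: Ou_def support_def\<close>)
  also have "\<dots> = x i * p x i * (\<Prod>u\<in>Ou. 1 - x u * p x u)"
    by (simp add: algebra_simps)
  finally show ?thesis by (simp add: Ou_def)
qed

lemma prod_ge_one_minus_sum:
  fixes f :: "'a \<Rightarrow> real"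
  assumes "finite A" "\<And>a. a \<in> A \<Longrightarrow> 0 \<le> f a \<and> f a \<le> 1"
  shows "1 - (\<Sum>a\<in>A. f a) \<le> (\<Prod>a\<in>A. 1 - f a)"
  using assms
proof (induction A rule: finite_induct)
  case empty
  then show ?case by simp
next
  case (insert a A)
  have IH: "1 - (\<Sum>a\<in>A. f a) \<le> (\<Prod>a\<in>A. 1 - f a)" using insert by auto
  have fa: "0 \<le> f a" "f a \<le> 1" using insert by auto
  have P0: "0 \<le> (\<Prod>a\<in>A. 1 - f a)" "(\<Prod>a\<in>A. 1 - f a) \<le> 1"
    using insert by (auto intro!: prod_nonneg prod_le_1)
  have "1 - (\<Sum>a\<in>insert a A. f a) = (1 - (\<Sum>a\<in>A. f a)) - f a" using insert by simp
  also have "\<dots> \<le> (\<Prod>a\<in>A. 1 - f a) - f a * (\<Prod>a\<in>A. 1 - f a)"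
    using IH fa P0 by (smt (verit) mult_left_le)
  also have "\<dots> = (\<Prod>a\<in>insert a A. 1 - f a)" using insert by (simp add: algebra_simps)
  finally show ?case .
qed

lemma prod_anti:
  fixes g :: "'a \<Rightarrow> real"
  assumes "finite B" "A \<subseteq> B" "\<And>a. a \<in> B \<Longrightarrow> 0 \<le> g a \<and> g a \<le> 1"
  shows "(\<Prod>a\<in>B. g a) \<le> (\<Prod>a\<in>A. g a)"
proof -
  have "(\<Prod>a\<in>B. g a) = (\<Prod>a\<in>A. g a) * (\<Prod>a\<in>B - A. g a)"
    using assms by (metis prod.subset_diff mult.commute)
  also have "\<dots> \<le> (\<Prod>a\<in>A. g a) * 1"
    using assms by (intro mult_left_mono prod_le_1 prod_nonneg) (auto dest: subsetD)
  finally show ?thesis by simp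
qed

lemma setup_facts:
  assumes k: "k \<ge> 1" and G: "simple_graph V E" and O: "k_perfect_orientation k V E H"
    and b: "0 \<le> b" "b \<le> 1"
  shows "finite V" "\<And>v. out_nbrs H v \<subseteq> V" "\<And>v. v \<notin> out_nbrs H v"
    "\<And>u v. E u v \<Longrightarrow> H u v \<or> H v u"
proof -
  show "finite V" using G by (simp add: simple_graph_def)
  show "out_nbrs H v \<subseteq> V" for v using G O
    by (auto simp: simple_graph_def k_perfect_orientation_def orientation_def out_nbrs_def)
  show "v \<notin> out_nbrs H v" for v using O
    by (auto simp: k_perfect_orientation_def orientation_def out_nbrs_def)
  show "E u v \<Longrightarrow> H u v \<or> H v u" for u v using O
    by (auto simp: k_perfect_orientation_def orientation_def)
qed

lemma x_facts:
  assumes k: "k \<ge> 1" and G: "simple_graph V E" and O: "k_perfect_orientation k V E H"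
    and b: "0 \<le> b" "b \<le> 1" and x: "x \<in> scaled (b / real k) (polytopeQ k V H)"
  shows "\<And>v. v \<in> V \<Longrightarrow> 0 \<le> x v \<and> x v \<le> 1"
    "\<And>i. i \<in> V \<Longrightarrow> x i + (\<Sum>u\<in>out_nbrs H i. x u) \<le> b"
proof -
  obtain y where y: "y \<in> polytopeQ k V H" and xy: "x = (\<lambda>v. b / real k * y v)"
    using x by (auto simp: scaled_def)
  have bk: "0 \<le> b / real k" "b / real k \<le> 1" using k b by auto
  show "0 \<le> x v \<and> x v \<le> 1" if "v \<in> V" for v
  proof -
    have "0 \<le> y v" "y v \<le> 1" using y that by (auto simp: polytopeQ_def)
    then have "0 \<le> b / real k * y v" "b / real k * y v \<le> 1"
      using bk by (simp_all only: mult_nonneg_nonneg mult_le_one)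
    then show ?thesis by (simp add: xy)
  qed
  show "x i + (\<Sum>u\<in>out_nbrs H i. x u) \<le> b" if "i \<in> V" for i
  proof -
    have "x i + (\<Sum>u\<in>out_nbrs H i. x u) = b / real k * (y i + (\<Sum>u\<in>out_nbrs H i. y u))"
      by (simp add: xy sum_distrib_left algebra_simps)
    also have "\<dots> \<le> b / real k * real k"
      using y that bk by (intro mult_left_mono) (auto simp: polytopeQ_def)
    also have "\<dots> = b" using k by simp
    finally show ?thesis .
  qed
qed

lemma dets_indep:
  assumes "B \<subseteq> V" "\<And>u v. E u v \<Longrightarrow> H u v \<or> H v u"
  shows "indep_set V E (dets H B)"
  using assms unfolding indep_set_def dets_def out_nbrs_def by blast

lemma schg_set:
  assumes "S \<in> set_pmf (schg V H p x A)" "\<And>u v. E u v \<Longrightarrow> H u v \<or> H v u"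
  shows "S \<subseteq> A \<inter> support V x \<and> indep_set V E S"
proof -
  obtain f where S: "S = dets H (A \<inter> support V x \<inter> {v. f v})"
    using assms(1) by (auto simp: schg_def)
  have "A \<inter> support V x \<inter> {v. f v} \<subseteq> V" by (auto simp: support_def)
  then have "indep_set V E (dets H (A \<inter> support V x \<inter> {v. f v}))"
    by (rule dets_indep[OF _ assms(2)])
  then show ?thesis using S by (auto simp: dets_def)
qed

lemma bern1: "bernoulli_pmf 1 = return_pmf True"
  by (intro pmf_eqI) (auto simp: pmf_bernoulli_True pmf_bernoulli_False indicator_def)

lemma schg_det:
  assumes "finite V"
  shows "schg V H (\<lambda>_ _. 1) x A = return_pmf (dets H (A \<inter> support V x))"
proof -
  have "A \<inter> support V x \<inter> {v. v \<in> V} = A \<inter> support V x" by (auto simp: support_def)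
  then show ?thesis using assms by (simp add: schg_def bern1)
qed

lemma schg_mono:
  assumes fin: "finite V" and OV: "\<And>v. out_nbrs H v \<subseteq> V" and iO: "\<And>v. v \<notin> out_nbrs H v"
    and p: "\<And>x v. 0 \<le> p x v \<and> p x v \<le> 1"
  shows "monotone_CR V Q c (schg V H p)"
  unfolding monotone_CR_def
proof (intro ballI allI impI)
  fix x i A1 A2
  assume i: "i \<in> A1" and A: "A1 \<subseteq> A2" "A2 \<subseteq> V"
  note P1 = prob_sch[where p=p and x=x and A=A1, OF fin OV iO p]
  note P2 = prob_sch[where p=p and x=x and A=A2, OF fin OV iO p]
  show "measure_pmf.prob (schg V H p x A2) {S. i \<in> S} \<le> measure_pmf.prob (schg V H p x A1) {S. i \<in> S}"
  proof (cases "i \<in> support V x")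
    case True
    have fB: "finite (out_nbrs H i \<inter> A2 \<inter> support V x)"
      using fin OV by (meson finite_Int finite_subset)
    have "(\<Prod>u\<in>out_nbrs H i \<inter> A2 \<inter> support V x. 1 - p x u) \<le> (\<Prod>u\<in>out_nbrs H i \<inter> A1 \<inter> support V x. 1 - p x u)"
      by (rule prod_anti[OF fB]) (use A p in auto)
    then show ?thesis using P1 P2 True i A p[of x i] by (auto intro: mult_left_mono)
  next
    case False
    then show ?thesis using P1 P2 by simp
  qed
qed

lemma schg_bal:
  assumes fin: "finite V" and OV: "\<And>v. out_nbrs H v \<subseteq> V" and iO: "\<And>v. v \<notin> out_nbrs H v"
    and Eor: "\<And>u v. E u v \<Longrightarrow> H u v \<or> H v u"
    and p: "\<And>x v. 0 \<le> p x v \<and> p x v \<le> 1"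
    and xr: "\<And>x v. x \<in> scaled c Q \<Longrightarrow> v \<in> V \<Longrightarrow> 0 \<le> x v \<and> x v \<le> 1"
    and lb: "\<And>x i. x \<in> scaled c Q \<Longrightarrow> i \<in> support V x \<Longrightarrow>
               d \<le> p x i * (\<Prod>u\<in>out_nbrs H i \<inter> support V x. 1 - x u * p x u)"
  shows "balanced_CR V E Q c d (schg V H p)"
  unfolding balanced_CR_def
proof (rule conjI)
  show "\<forall>x\<in>scaled c Q. \<forall>A. A \<subseteq> V \<longrightarrow> (\<forall>S\<in>set_pmf (schg V H p x A). S \<subseteq> A \<inter> support V x \<and> indep_set V E S)"
    using schg_set[where H=H and E=E, OF _ Eor] by blast
next
  show "\<forall>x\<in>scaled c Q. \<forall>i\<in>support V x. d \<le> measure_pmf.prob (joint V (schg V H p) x) {pr. i \<in> snd pr \<and> i \<in> fst pr} /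
          measure_pmf.prob (randset V x) {R. i \<in> R}"
  proof (intro ballI)
  fix x i
  assume x: "x \<in> scaled c Q" and i: "i \<in> support V x"
  have iV: "i \<in> V" and xi: "x i > 0" using i by (auto simp: support_def)
  have J: "measure_pmf.prob (joint V (schg V H p) x) {pr. i \<in> snd pr \<and> i \<in> fst pr} =
     x i * p x i * (\<Prod>u\<in>out_nbrs H i \<inter> support V x. 1 - x u * p x u)"
    by (rule prob_joint[OF fin OV iO p _ i]) (use xr x in auto)
  have R: "measure_pmf.prob (randset V x) {R. i \<in> R} = x i"
    by (rule prob_randset[OF fin iV]) (use xr x in auto)
  show "d \<le> measure_pmf.prob (joint V (schg V H p) x) {pr. i \<in> snd pr \<and> i \<in> fst pr} /
          measure_pmf.prob (randset V x) {R. i \<in> R}"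
    unfolding J R using xi lb[OF x i] by simp
  qed
qed

lemma one_minus_exp_le: "0 \<le> t \<Longrightarrow> 1 - exp (- t) \<le> (t::real)"
  using exp_ge_add_one_self[of "- t"] by simp

theorem theorem3:
  fixes k :: nat and V :: "'a set" and E H :: "'a \<Rightarrow> 'a \<Rightarrow> bool" and b :: real
  assumes "k \<ge> 1"
    and "simple_graph V E"
    and "k_perfect_orientation k V E H"
    and "0 \<le> b" and "b \<le> 1"
  shows "(\<exists>sch. deterministic_CR sch \<and> oblivious_CR V sch \<and> monotone_CR V (polytopeQ k V H) (b / real k) sch
            \<and> balanced_CR V E (polytopeQ k V H) (b / real k) (1 - b) sch)
       \<and> (\<exists>sch. monotone_CR V (polytopeQ k V H) (b / real k) sch
            \<and> balanced_CR V E (polytopeQ k V H) (b / real k) (exp (- b)) sch)"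
proof -
  note S = setup_facts[OF assms]
  note XF = x_facts[OF assms]
  have fin: "finite V" by (rule S(1))
  have fO: "finite (out_nbrs H v)" for v using S(1,2) finite_subset by blast
  let ?Q = "polytopeQ k V H" and ?c = "b / real k"
  define sd where "sd = schg V H (\<lambda>_ _. 1)"
  define pr where "pr x v = (if 0 < x v then (1 - exp (- x v)) / x v else 1)" for x :: "'a \<Rightarrow> real" and v
  have pr01: "0 \<le> pr x v \<and> pr x v \<le> 1" for x v
    using one_minus_exp_le[of "x v"] by (auto simp: pr_def divide_simps)
  have sd_eq: "sd x A = return_pmf (dets H (A \<inter> support V x))" for x A
    unfolding sd_def by (rule schg_det[OF fin])
  have sum_le: "(\<Sum>u\<in>out_nbrs H i \<inter> support V x. x u) \<le> b - x i"
    if x: "x \<in> scaled ?c ?Q" and i: "i \<in> support V x" for x i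
  proof -
    have iV: "i \<in> V" using i by (auto simp: support_def)
    have "(\<Sum>u\<in>out_nbrs H i \<inter> support V x. x u) \<le> (\<Sum>u\<in>out_nbrs H i. x u)"
      using fO S(2) XF(1)[OF x] by (intro sum_mono2) (auto)
    then show ?thesis using XF(2)[OF x iV] by simp
  qed
  have det: "deterministic_CR sd \<and> oblivious_CR V sd \<and> monotone_CR V ?Q ?c sd
            \<and> balanced_CR V E ?Q ?c (1 - b) sd"
  proof (intro conjI)
    show dt: "deterministic_CR sd" unfolding deterministic_CR_def sd_eq
      by (rule exI[where x="\<lambda>x A. dets H (A \<inter> support V x)"]) simp
    show "oblivious_CR V sd" unfolding oblivious_CR_def using dt by (simp add: sd_eq)
    show "monotone_CR V ?Q ?c sd" unfolding sd_def by (rule schg_mono[OF fin S(2,3)]) simp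
    show "balanced_CR V E ?Q ?c (1 - b) sd" unfolding sd_def
    proof (rule schg_bal[OF fin S(2,3,4)])
      show "0 \<le> (1::real) \<and> (1::real) \<le> 1" by simp
      show "0 \<le> x v \<and> x v \<le> 1" if "x \<in> scaled ?c ?Q" "v \<in> V" for x v using XF(1) that by blast
      show "1 - b \<le> 1 * (\<Prod>u\<in>out_nbrs H i \<inter> support V x. 1 - x u * 1)"
        if x: "x \<in> scaled ?c ?Q" and i: "i \<in> support V x" for x i
      proof -
        have "1 - b \<le> 1 - (\<Sum>u\<in>out_nbrs H i \<inter> support V x. x u)"
          using sum_le[OF x i] i by (auto simp: support_def)
        also have "\<dots> \<le> (\<Prod>u\<in>out_nbrs H i \<inter> support V x. 1 - x u)"
          by (rule prod_ge_one_minus_sum) (use fO XF(1)[OF x] S(2) in auto)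
        finally show ?thesis by simp
      qed
    qed
  qed
  have rnd: "monotone_CR V ?Q ?c (schg V H pr) \<and> balanced_CR V E ?Q ?c (exp (- b)) (schg V H pr)"
  proof (intro conjI)
    show "monotone_CR V ?Q ?c (schg V H pr)" by (rule schg_mono[OF fin S(2,3) pr01])
    show "balanced_CR V E ?Q ?c (exp (- b)) (schg V H pr)"
    proof (rule schg_bal[OF fin S(2,3,4) pr01])
      show "0 \<le> x v \<and> x v \<le> 1" if "x \<in> scaled ?c ?Q" "v \<in> V" for x v using XF(1) that by blast
      show "exp (- b) \<le> pr x i * (\<Prod>u\<in>out_nbrs H i \<inter> support V x. 1 - x u * pr x u)"
        if x: "x \<in> scaled ?c ?Q" and i: "i \<in> support V x" for x i
      proof -
        have xi: "0 < x i" using i by (auto simp: support_def)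
        have "(\<Prod>u\<in>out_nbrs H i \<inter> support V x. 1 - x u * pr x u) = (\<Prod>u\<in>out_nbrs H i \<inter> support V x. exp (- x u))"
          by (intro prod.cong) (auto simp: support_def pr_def)
        also have "\<dots> = exp (- (\<Sum>u\<in>out_nbrs H i \<inter> support V x. x u))"
          using exp_sum[of "out_nbrs H i \<inter> support V x" "\<lambda>u. - x u"] fO[of i]
          by (simp add: sum_negf)
        finally have P: "(\<Prod>u\<in>out_nbrs H i \<inter> support V x. 1 - x u * pr x u) \<ge> exp (x i - b)"
          using sum_le[OF x i] by simp
        have "pr x i * exp (x i) \<ge> 1"
        proof -
          have "pr x i * exp (x i) = (exp (x i) - 1) / x i"
            using xi by (simp add: pr_def field_simps exp_minus)
          also have "\<dots> \<ge> 1"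
          proof -
            have "1 + x i \<le> exp (x i)" by (rule exp_ge_add_one_self)
            then have "x i \<le> exp (x i) - 1" by linarith
            then show ?thesis using xi le_divide_eq_1_pos[of "x i" "exp (x i) - 1"] by blast
          qed
          finally show ?thesis .
        qed
        then have "exp (- b) \<le> pr x i * exp (x i) * exp (- b)" by simp
        also have "\<dots> = pr x i * exp (x i - b)" by (simp add: exp_diff exp_minus field_simps)
        also have "\<dots> \<le> pr x i * (\<Prod>u\<in>out_nbrs H i \<inter> support V x. 1 - x u * pr x u)"
          using P pr01[of x i] by (intro mult_left_mono) auto
        finally show ?thesis .
      qed
    qed
  qed
  show ?thesis using det rnd by blast
qed

end
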